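(* Assume $1-4M_0=0$. For $x\in\Omega_0$ put $A(x):=\partial_x u_0(x)$ and $B(x):=-\tfrac12\partial_x u_0(x)-\tfrac14+2\rho_0(x)$, and for $t\ge0$ $$D(t,x):=8\rho_0(x)-\big(2A(x)+4B(x)\big)e^{-t/2}-2B(x)\,t\,e^{-t/2}$$ (this is the expression of $\partial_x\eta(t,x)$ for a classical solution of the Lagrangian system, as long as it exists). Then there exist $t>0$ and $x\in\Omega_0$ with $D(t,x)\le0$ if and only if there exists $x\in\Omega_0$ such that $$\partial_x u_0(x)<\min\Big\{0,\,4\rho_0(x)-\tfrac12\Big\}$$ and $$\ln\left(\frac{8\rho_0(x)}{8\rho_0(x)-2\partial_x u_0(x)-1}\right)\le\frac{2\partial_x u_0(x)}{8\rho_0(x)-2\partial_x u_0(x)-1}.$$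
   Context: $\Omega_0=(a_0,b_0)$ is a bounded open interval, $\rho_0\in H^2(\Omega_0)$ with $\rho_0>0$ on $\Omega_0$, $u_0\in H^3(\Omega_0)$ (both continuous up to the boundary), and $M_0:=\int_{\Omega_0}\rho_0(x)\,dx>0$. Note $D(0,x)=1$ for all $x$. *)

theory Defs
  imports "HOL-Analysis.Analysis"
begin

definition Acoef :: "(real \<Rightarrow> real) \<Rightarrow> real \<Rightarrow> real" where
  "Acoef u0 x = deriv u0 x"

definition Bcoef :: "(real \<Rightarrow> real) \<Rightarrow> (real \<Rightarrow> real) \<Rightarrow> real \<Rightarrow> real" where
  "Bcoef rho0 u0 x = - (1/2) * deriv u0 x - 1/4 + 2 * rho0 x"

definition Dfun :: "(real \<Rightarrow> real) \<Rightarrow> (real \<Rightarrow> real) \<Rightarrow> real \<Rightarrow> real \<Rightarrow> real" where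
  "Dfun rho0 u0 t x = 8 * rho0 x - (2 * Acoef u0 x + 4 * Bcoef rho0 u0 x) * exp (- t / 2)
     - 2 * Bcoef rho0 u0 x * t * exp (- t / 2)"

end

theory Submission
  imports Defs
begin

lemma key:
  fixes r d :: real
  assumes r: "r > 0"
  shows "(\<exists>t>0. 8 * r - (2 * d + 4 * (- (1/2) * d - 1/4 + 2 * r)) * exp (- t / 2)
     - 2 * (- (1/2) * d - 1/4 + 2 * r) * t * exp (- t / 2) \<le> 0) \<longleftrightarrow>
     (d < min 0 (4 * r - 1/2) \<and> ln (8 * r / (8 * r - 2 * d - 1)) \<le> 2 * d / (8 * r - 2 * d - 1))"
proof -
  define c where "c = 8 * r - 2 * d - 1"
  define g where "g s = 8 * r * exp s - (8 * r - 1) - c * s" for s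
  have De: "8 * r - (2 * d + 4 * (- (1/2) * d - 1/4 + 2 * r)) * exp (- t / 2)
     - 2 * (- (1/2) * d - 1/4 + 2 * r) * t * exp (- t / 2) = exp (- t/2) * g (t/2)" for t
  proof -
    have "exp (- t/2) * exp (t/2) = 1" by (simp add: exp_minus field_simps)
    thus ?thesis unfolding g_def c_def by (simp add: algebra_simps)
  qed
  have Dle: "(8 * r - (2 * d + 4 * (- (1/2) * d - 1/4 + 2 * r)) * exp (- t / 2)
     - 2 * (- (1/2) * d - 1/4 + 2 * r) * t * exp (- t / 2) \<le> 0) = (g (t/2) \<le> 0)" for t
    unfolding De by (simp add: mult_le_0_iff)
  show ?thesis unfolding Dle
  proof
    assume "\<exists>t>0. g (t/2) \<le> 0"
    then obtain t where t: "t > 0" "g (t/2) \<le> 0" by blast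
    define s where "s = t/2"
    have s: "s > 0" "g s \<le> 0" using t s_def by auto
    have dlt: "d < -1/2"
    proof (rule ccontr)
      assume "\<not> d < -1/2"
      hence "c \<le> 8 * r" unfolding c_def by simp
      hence "c * s \<le> 8 * r * s" using s by (simp add: mult_right_mono)
      moreover have "8 * r * (1 + s) \<le> 8 * r * exp s" using r exp_ge_add_one_self[of s] by simp
      ultimately have "g s \<ge> 1" unfolding g_def by (simp add: algebra_simps)
      thus False using s by simp
    qed
    hence cpos: "c > 8 * r" unfolding c_def by simp
    hence cp: "c > 0" using r by simp
    define sm where "sm = ln (c / (8 * r))"
    have ess: "exp sm = c / (8*r)" unfolding sm_def using cp r by simp
    have "exp (s - sm) \<ge> 1 + (s - sm)" by (rule exp_ge_add_one_self)
    hence "8 * r * exp s \<ge> c * (1 + s - sm)"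
      using ess r cp by (simp add: exp_diff field_simps)
    hence "g s \<ge> c - 8 * r + 1 - c * sm" unfolding g_def by (simp add: algebra_simps)
    hence "c * sm \<ge> -2 * d" using s unfolding c_def by simp
    moreover have "ln (8 * r / c) = - sm" unfolding sm_def using cp r by (simp add: ln_div)
    ultimately have "ln (8 * r / c) \<le> 2 * d / c" using cp by (simp add: field_simps)
    thus "d < min 0 (4 * r - 1/2) \<and> ln (8 * r / (8 * r - 2 * d - 1)) \<le> 2 * d / (8 * r - 2 * d - 1)"
      using dlt r unfolding c_def by simp
  next
    assume H: "d < min 0 (4 * r - 1/2) \<and> ln (8 * r / (8 * r - 2 * d - 1)) \<le> 2 * d / (8 * r - 2 * d - 1)"
    hence cp: "c > 0" and dn: "d < 0" and L: "ln (8 * r / c) \<le> 2 * d / c" unfolding c_def by auto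
    have dlt: "d < -1/2"
    proof (rule ccontr)
      assume "\<not> d < -1/2"
      hence "8 * r / c \<ge> 1" unfolding c_def using cp c_def by simp
      hence "ln (8 * r / c) \<ge> 0" by simp
      moreover have "2 * d / c < 0" using dn cp by (simp add: divide_neg_pos)
      ultimately show False using L by simp
    qed
    hence cpos: "c > 8 * r" unfolding c_def by simp
    define sm where "sm = ln (c / (8 * r))"
    have ssp: "sm > 0" unfolding sm_def using cpos r by simp
    have ess: "exp sm = c / (8*r)" unfolding sm_def using cp r by simp
    have "ln (8 * r / c) = - sm" unfolding sm_def using cp r by (simp add: ln_div)
    hence "- sm * c \<le> 2 * d" using L cp by (simp add: field_simps)
    moreover have "8 * r * exp sm = c" using ess r by simp
    moreover have "c - 8 * r + 1 = - 2 * d" unfolding c_def by simp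
    ultimately have "g sm \<le> 0" unfolding g_def by (simp add: algebra_simps)
    hence "g ((2 * sm)/2) \<le> 0" by simp
    thus "\<exists>t>0. g (t/2) \<le> 0" using ssp by (intro exI[of _ "2 * sm"]) simp
  qed
qed

theorem proposition3p2:
  fixes a0 b0 :: real and rho0 u0 :: "real \<Rightarrow> real"
  assumes "a0 < b0"
    and "continuous_on {a0..b0} rho0"
    and "\<forall>x\<in>{a0<..<b0}. rho0 x > 0"
    and "continuous_on {a0..b0} u0"
    and "\<forall>x\<in>{a0<..<b0}. u0 differentiable (at x)"
    and "continuous_on {a0<..<b0} (deriv u0)"
    and "integral {a0..b0} rho0 > 0"
    and "1 - 4 * integral {a0..b0} rho0 = 0"
  shows "(\<exists>t>0. \<exists>x\<in>{a0<..<b0}. Dfun rho0 u0 t x \<le> 0) \<longleftrightarrow>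
         (\<exists>x\<in>{a0<..<b0}.
            deriv u0 x < min 0 (4 * rho0 x - 1/2) \<and>
            ln (8 * rho0 x / (8 * rho0 x - 2 * deriv u0 x - 1))
              \<le> 2 * deriv u0 x / (8 * rho0 x - 2 * deriv u0 x - 1))"
  proof -
  have "Dfun rho0 u0 t x = 8 * rho0 x - (2 * deriv u0 x + 4 * (- (1/2) * deriv u0 x - 1/4 + 2 * rho0 x)) * exp (- t / 2)
     - 2 * (- (1/2) * deriv u0 x - 1/4 + 2 * rho0 x) * t * exp (- t / 2)" for t x
    unfolding Dfun_def Acoef_def Bcoef_def by simp
  hence E: "(\<exists>t>0. Dfun rho0 u0 t x \<le> 0) \<longleftrightarrow> (deriv u0 x < min 0 (4 * rho0 x - 1/2) \<and>
            ln (8 * rho0 x / (8 * rho0 x - 2 * deriv u0 x - 1))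
              \<le> 2 * deriv u0 x / (8 * rho0 x - 2 * deriv u0 x - 1))" if "x \<in> {a0<..<b0}" for x
    using key[of "rho0 x" "deriv u0 x"] assms(3) that by simp
  show ?thesis
  proof
    assume "\<exists>t>0. \<exists>x\<in>{a0<..<b0}. Dfun rho0 u0 t x \<le> 0"
    then obtain t x where "t > 0" "x \<in> {a0<..<b0}" "Dfun rho0 u0 t x \<le> 0" by blast
    thus "\<exists>x\<in>{a0<..<b0}. deriv u0 x < min 0 (4 * rho0 x - 1/2) \<and>
            ln (8 * rho0 x / (8 * rho0 x - 2 * deriv u0 x - 1))
              \<le> 2 * deriv u0 x / (8 * rho0 x - 2 * deriv u0 x - 1)" using E by blast
  next
    assume "\<exists>x\<in>{a0<..<b0}. deriv u0 x < min 0 (4 * rho0 x - 1/2) \<and>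
            ln (8 * rho0 x / (8 * rho0 x - 2 * deriv u0 x - 1))
              \<le> 2 * deriv u0 x / (8 * rho0 x - 2 * deriv u0 x - 1)"
    then obtain x where "x \<in> {a0<..<b0}" "deriv u0 x < min 0 (4 * rho0 x - 1/2) \<and>
            ln (8 * rho0 x / (8 * rho0 x - 2 * deriv u0 x - 1))
              \<le> 2 * deriv u0 x / (8 * rho0 x - 2 * deriv u0 x - 1)" by blast
    thus "\<exists>t>0. \<exists>x\<in>{a0<..<b0}. Dfun rho0 u0 t x \<le> 0" using E by blast
  qed
qed

end
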